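(* Let $G$ and $H$ be finite sequences of non-negative integers, each having at least one nonzero entry, with $\langle G\rangle=\langle H\rangle$. Then some permutation of $G$ is telescopic if and only if some permutation of $H$ is telescopic.
   Context: For a finite sequence $G=(g_1,\dots,g_k)\in\mathbb{N}_0^k$, $\langle G\rangle$ is the set of $\mathbb{N}_0$-linear combinations of its entries. With $G_i=(g_1,\dots,g_i)$ and $d_i=\gcd(G_i)$, for $G$ with $g_1>0$ if $k=1$ and $g_1+g_2>0$ if $k\ge2$, set $c_j=d_{j-1}/d_j$ ($2\le j\le k$); $G$ is telescopic if $c_jg_j\in\langle G_{j-1}\rangle$ for all $2\le j\le k$. A permutation of $G$ is $(g_{\sigma(1)},\dots,g_{\sigma(k)})$ for $\sigma$ in the symmetric group on $k$ letters. *)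

theory Defs
  imports "HOL-Combinatorics.Permutations"
begin

text \<open>A finite sequence G = (g_1,...,g_k) of non-negative integers is a list of naturals;
  g_j is G ! (j-1) and the prefix G_i is take i G.\<close>

definition lincomb_set :: "nat list \<Rightarrow> nat set" where
  "lincomb_set G = {(\<Sum>i<length G. a i * G ! i) | a :: nat \<Rightarrow> nat. True}"

definition dpref :: "nat list \<Rightarrow> nat \<Rightarrow> nat" where
  "dpref G i = Gcd (set (take i G))"

text \<open>Telescopic sequences, including the standing non-degeneracy requirement
  (g_1 > 0 if k = 1, g_1 + g_2 > 0 if k >= 2).\<close>
definition telescopic :: "nat list \<Rightarrow> bool" where
  "telescopic G \<longleftrightarrow>
     G \<noteq> [] \<and>
     (length G = 1 \<longrightarrow> G ! 0 > 0) \<and>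
     (length G \<ge> 2 \<longrightarrow> G ! 0 + G ! 1 > 0) \<and>
     (\<forall>j. 2 \<le> j \<and> j \<le> length G \<longrightarrow>
        (dpref G (j - 1) div dpref G j) * G ! (j - 1) \<in> lincomb_set (take (j - 1) G))"

definition permute_seq :: "(nat \<Rightarrow> nat) \<Rightarrow> nat list \<Rightarrow> nat list" where
  "permute_seq \<sigma> G = map (\<lambda>i. G ! \<sigma> i) [0..<length G]"

end

theory Submission
  imports Defs
begin


inductive_set gen :: "nat set \<Rightarrow> nat set" for X where
  gen0: "0 \<in> gen X"
| genI: "a \<in> X \<Longrightarrow> x \<in> gen X \<Longrightarrow> a + x \<in> gen X"

lemma gen_add: "x \<in> gen X \<Longrightarrow> y \<in> gen X \<Longrightarrow> x + y \<in> gen X"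
  by (induction x rule: gen.induct) (auto simp: add.assoc intro: gen.intros)

lemma gen_base: "a \<in> X \<Longrightarrow> a \<in> gen X"
  using genI[OF _ gen0] by simp

lemma gen_mult: "x \<in> gen X \<Longrightarrow> m * x \<in> gen X"
  by (induction m) (auto intro: gen0 gen_add)

lemma gen_sub_gen: "Y \<subseteq> gen Z \<Longrightarrow> gen Y \<subseteq> gen Z"
proof
  fix x assume Y: "Y \<subseteq> gen Z" and X: "x \<in> gen Y" from X show "x \<in> gen Z"
    by (induction x rule: gen.induct) (use Y in \<open>auto intro: gen0 gen_add\<close>)
qed

lemma gen_mono: "Y \<subseteq> Z \<Longrightarrow> gen Y \<subseteq> gen Z"
  by (rule gen_sub_gen) (auto intro: gen_base)

lemma gen_insert: "x \<in> gen (insert g X) \<longleftrightarrow> (\<exists>y m. y \<in> gen X \<and> x = y + m * g)"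
proof
  assume "x \<in> gen (insert g X)" then show "\<exists>y m. y \<in> gen X \<and> x = y + m * g"
  proof (induction x rule: gen.induct)
    case gen0 then show ?case using gen.gen0 by force
  next
    case (genI a x)
    then obtain y m where y: "y \<in> gen X" "x = y + m * g" by blast
    show ?case
    proof (cases "a = g")
      case True then show ?thesis using y by (intro exI[of _ y] exI[of _ "Suc m"]) auto
    next
      case False then show ?thesis using y genI(1) gen.genI[of a X y]
        by (intro exI[of _ "a + y"] exI[of _ m]) auto
    qed
  qed
next
  assume "\<exists>y m. y \<in> gen X \<and> x = y + m * g"
  then obtain y m where "y \<in> gen X" "x = y + m * g" by blast
  moreover have "y \<in> gen (insert g X)" using \<open>y \<in> gen X\<close> gen_mono[of X "insert g X"] by auto
  moreover have "m * g \<in> gen (insert g X)" by (intro gen_mult gen_base) auto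
  ultimately show "x \<in> gen (insert g X)" using gen_add by auto
qed

lemma gen_Gcd_dvd: "x \<in> gen X \<Longrightarrow> Gcd X dvd x"
  by (induction x rule: gen.induct) auto

lemma Gcd_gen: "Gcd (gen X) = Gcd X"
proof (rule dvd_antisym)
  show "Gcd (gen X) dvd Gcd X" by (rule Gcd_greatest) (auto intro: Gcd_dvd gen_base)
  show "Gcd X dvd Gcd (gen X)" by (rule Gcd_greatest) (auto intro: gen_Gcd_dvd)
qed

lemma gen_eq_Gcd: "gen X = gen Y \<Longrightarrow> Gcd X = Gcd Y"
  by (metis Gcd_gen)

definition atoms :: "nat set \<Rightarrow> nat set" where
  "atoms S = {x \<in> S. x \<noteq> 0 \<and> (\<forall>a b. a \<in> S \<longrightarrow> b \<in> S \<longrightarrow> x = a + b \<longrightarrow> a = 0 \<or> b = 0)}"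

lemma atoms_subset: "atoms (gen X) \<subseteq> X"
proof
  fix x assume "x \<in> atoms (gen X)"
  hence "x \<in> gen X" and at: "x \<noteq> 0" "\<And>a b. a \<in> gen X \<Longrightarrow> b \<in> gen X \<Longrightarrow> x = a + b \<Longrightarrow> a = 0 \<or> b = 0"
    by (auto simp: atoms_def)
  then show "x \<in> X"
  proof (induction x rule: gen.induct)
    case gen0 then show ?case by simp
  next
    case (genI a y)
    have "a = 0 \<or> y = 0" using genI.prems(2)[of a y] genI.hyps gen_base by auto
    then show ?case using genI by auto
  qed
qed

lemma gen_atoms: "gen (atoms (gen X)) = gen X"
proof
  show "gen (atoms (gen X)) \<subseteq> gen X" by (rule gen_sub_gen) (auto simp: atoms_def)
  show "gen X \<subseteq> gen (atoms (gen X))"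
  proof
    fix x assume "x \<in> gen X" then show "x \<in> gen (atoms (gen X))"
    proof (induction x rule: less_induct)
      case (less x)
      show ?case
      proof (cases "x \<in> atoms (gen X)")
        case True then show ?thesis by (rule gen_base)
      next
        case False
        show ?thesis
        proof (cases "x = 0")
          case True then show ?thesis by (simp add: gen0)
        next
          case False
          with \<open>x \<notin> atoms (gen X)\<close> less.prems obtain a b where
            "a \<in> gen X" "b \<in> gen X" "x = a + b" "a \<noteq> 0" "b \<noteq> 0" by (auto simp: atoms_def)
          then show ?thesis using less.IH[of a] less.IH[of b] gen_add by auto
        qed
      qed
    qed
  qed
qed

lemma lincomb_gen: "lincomb_set L = gen (set L)"
proof (induction L)
  case Nil then show ?case
    by (auto simp: lincomb_set_def elim: gen.cases intro: gen0)
next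
  case (Cons x L)
  have "lincomb_set (x # L) = {k * x + y | k y. y \<in> lincomb_set L}"
  proof -
    have "(\<Sum>i<length (x#L). a i * (x#L) ! i) = a 0 * x + (\<Sum>i<length L. a (Suc i) * L ! i)" for a
      unfolding length_Cons sum.lessThan_Suc_shift by simp
    moreover have "k * x + (\<Sum>i<length L. b i * L ! i) =
        (\<Sum>i<length (x#L). (case_nat k b) i * (x#L) ! i)" for k b
      unfolding length_Cons sum.lessThan_Suc_shift by simp
    ultimately show ?thesis unfolding lincomb_set_def by (auto; metis)
  qed
  also have "\<dots> = gen (insert x (set L))"
    using Cons by (auto simp: gen_insert) (metis add.commute)+
  finally show ?case by simp
qed



definition cnd :: "nat set \<Rightarrow> nat \<Rightarrow> bool" where
  "cnd Y x \<longleftrightarrow> (Gcd Y div gcd (Gcd Y) x) * x \<in> gen Y"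

lemma dpref_Suc: "j < length (L::nat list) \<Longrightarrow> Gcd (set (take (Suc j) L)) = gcd (Gcd (set (take j L))) (L ! j)"
  proof -
  assume "j < length L"
  then have "set (take (Suc j) L) = insert (L ! j) (set (take j L))" by (simp add: take_Suc_conv_app_nth)
  then show ?thesis by (simp only: Gcd_insert gcd.commute)
qed

lemma tele_alt: "telescopic L \<longleftrightarrow> L \<noteq> [] \<and> (length L = 1 \<longrightarrow> L!0 > 0) \<and>
   (2 \<le> length L \<longrightarrow> 0 < L!0 + L!1) \<and> (\<forall>j. 0 < j \<and> j < length L \<longrightarrow> cnd (set (take j L)) (L!j))"
proof -
  have "(\<forall>j. 2 \<le> j \<and> j \<le> length L \<longrightarrow>
        (dpref L (j - 1) div dpref L j) * L ! (j - 1) \<in> lincomb_set (take (j - 1) L))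
     \<longleftrightarrow> (\<forall>j. 0 < j \<and> j < length L \<longrightarrow> cnd (set (take j L)) (L!j))"
  proof safe
    fix j assume H: "\<forall>j. 2 \<le> j \<and> j \<le> length L \<longrightarrow>
        (dpref L (j - 1) div dpref L j) * L ! (j - 1) \<in> lincomb_set (take (j - 1) L)"
      and j: "0 < j" "j < length L"
    from H[rule_format, of "Suc j"] j show "cnd (set (take j L)) (L!j)"
      by (simp add: cnd_def dpref_def dpref_Suc lincomb_gen)
  next
    fix j assume H: "\<forall>j. 0 < j \<and> j < length L \<longrightarrow> cnd (set (take j L)) (L!j)"
      and j: "2 \<le> j" "j \<le> length L"
    then obtain i where i: "j = Suc i" "0 < i" "i < length L" by (cases j) auto
    from H[rule_format, of i] i show "(dpref L (j - 1) div dpref L j) * L ! (j - 1) \<in> lincomb_set (take (j - 1) L)"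
      by (simp add: cnd_def dpref_def dpref_Suc lincomb_gen)
  qed
  then show ?thesis unfolding telescopic_def by simp
qed

lemma key:
  assumes "0 < (d::nat)" "d dvd R"
  shows "gcd R ((d div gcd d g) * g) = (d div gcd d g) * gcd R g"
proof -
  define e where "e = gcd d g"
  define c where "c = d div e"
  have e0: "0 < e" using assms(1) by (simp add: e_def)
  have dce: "d = c * e" by (simp add: c_def e_def)
  obtain g' where g': "g = e * g'" unfolding e_def by (meson gcd_dvd2 dvdE)
  obtain t where t: "R = d * t" using assms(2) by blast
  have cop: "coprime g' c"
  proof -
    have "coprime (d div e) (g div e)" unfolding e_def using assms(1) by (intro div_gcd_coprime) auto
    then show ?thesis using e0 g' by (simp add: c_def coprime_commute)
  qed
  have "gcd R (c * g) = c * e * gcd t g'"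
    by (simp add: t dce g' gcd_mult_distrib_nat[symmetric] mult.assoc mult.left_commute)
  moreover have "gcd R g = e * gcd t g'"
  proof -
    have "gcd R g = gcd (e * (c * t)) (e * g')" by (simp add: t dce g' ac_simps)
    also have "\<dots> = e * gcd (c * t) g'" by (simp add: gcd_mult_distrib_nat)
    also have "gcd (c * t) g' = gcd t g'" using cop by (simp add: gcd_mult_left_left_cancel)
    finally show ?thesis .
  qed
  ultimately show ?thesis by (simp add: c_def e_def)
qed

lemma c_dvd:
  assumes "0 < (d::nat)" "d dvd k * g"
  shows "(d div gcd d g) dvd k"
proof -
  define e where "e = gcd d g"
  have e0: "0 < e" using assms(1) by (simp add: e_def)
  obtain g' where g': "g = e * g'" unfolding e_def by (meson gcd_dvd2 dvdE)
  have d: "d = (d div e) * e" by (simp add: e_def)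
  have cop: "coprime (d div e) g'"
  proof -
    have "coprime (d div e) (g div e)" unfolding e_def using assms(1) by (intro div_gcd_coprime) auto
    then show ?thesis using e0 g' by simp
  qed
  have "(d div e) * e dvd (k * g') * e" using assms(2) d g' by (metis mult.commute mult.left_commute)
  then have "(d div e) dvd k * g'" using e0 by simp
  then show ?thesis using cop unfolding e_def[symmetric] by (simp add: coprime_dvd_mult_left_iff)
qed

lemma c_one: "0 < (d::nat) \<Longrightarrow> d div gcd d g = 1 \<longleftrightarrow> d dvd g"
  by (metis div_self dvd_div_eq_mult gcd_dvd1 gcd_eq_0_iff gcd_nat.absorb_iff1 mult_1 neq0_conv)

lemma c_pos: "0 < (d::nat) \<Longrightarrow> 0 < d div gcd d g"
  by (simp add: div_greater_zero_iff gcd_le1_nat)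



definition T :: "nat list \<Rightarrow> bool" where
  "T A \<longleftrightarrow> A \<noteq> [] \<and> (\<forall>x\<in>set A. 0 < x) \<and> (\<forall>j. 0 < j \<and> j < length A \<longrightarrow> cnd (set (take j A)) (A!j))"

lemma T_snoc:
  assumes "T A" "0 < g" "cnd (set A) g"
  shows "T (A @ [g])"
  unfolding T_def
proof (intro conjI allI impI)
  show "A @ [g] \<noteq> []" by simp
  show "\<forall>x\<in>set (A @ [g]). 0 < x" using assms unfolding T_def by auto
  fix j assume j: "0 < j \<and> j < length (A @ [g])"
  show "cnd (set (take j (A @ [g]))) ((A @ [g]) ! j)"
  proof (cases "j < length A")
    case True then show ?thesis using assms(1) j by (simp add: T_def nth_append)
  next
    case False then have "j = length A" using j by simp
    then show ?thesis using assms(3) by simp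
  qed
qed

lemma gen_insert_cong: "gen Y = gen Z \<Longrightarrow> gen (insert g Y) = gen (insert g Z)"
  by (auto simp: gen_insert)

lemma atom_new:
  assumes "g \<notin> gen X" "0 < g"
  shows "g \<in> atoms (gen (insert g X))"
proof -
  have gS: "g \<in> gen (insert g X)" by (rule gen_base) simp
  have "a = 0 \<or> b = 0" if ab: "a \<in> gen (insert g X)" "b \<in> gen (insert g X)" "g = a + b" for a b
  proof -
    obtain a' m where a: "a' \<in> gen X" "a = a' + m * g" using ab(1) unfolding gen_insert by blast
    obtain b' n where b: "b' \<in> gen X" "b = b' + n * g" using ab(2) unfolding gen_insert by blast
    have "a + b = (a' + b') + (m + n) * g" using a(2) b(2) by (simp add: algebra_simps)
    then have e: "g = (a' + b') + (m + n) * g" using ab(3) by simp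
    show ?thesis
    proof (cases "m + n = 0")
      case True
      then have "g = a' + b'" using e by simp
      moreover have "a' + b' \<in> gen X" using a(1) b(1) by (rule gen_add)
      ultimately show ?thesis using assms(1) by simp
    next
      case False
      then have "1 \<le> m + n" by linarith
      then have "1 * g \<le> (m + n) * g" by (rule mult_le_mono1)
      then have "a' + b' = 0" "(m + n) * g = 1 * g" using e by linarith+
      then have "m + n = 1" using assms(2) by simp
      then show ?thesis using a(2) b(2) \<open>a' + b' = 0\<close> by (cases m) auto
    qed
  qed
  then show ?thesis using gS assms(2) unfolding atoms_def by blast
qed

lemma atom_old:
  assumes d: "0 < Gcd X" and cg: "(Gcd X div gcd (Gcd X) g) * g \<in> gen X" and g: "0 < g"
    and x: "x \<in> atoms (gen X)" and xne: "x \<noteq> (Gcd X div gcd (Gcd X) g) * g"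
  shows "x \<in> atoms (gen (insert g X))"
proof -
  define c where "c = Gcd X div gcd (Gcd X) g"
  have c0: "0 < c" unfolding c_def using d by (rule c_pos)
  have xS': "x \<in> gen X" "x \<noteq> 0" and xat: "\<And>a b. a \<in> gen X \<Longrightarrow> b \<in> gen X \<Longrightarrow> x = a + b \<Longrightarrow> a = 0 \<or> b = 0"
    using x by (auto simp: atoms_def)
  have xS: "x \<in> gen (insert g X)" using xS' gen_mono[of X "insert g X"] by auto
  have "a = 0 \<or> b = 0" if ab: "a \<in> gen (insert g X)" "b \<in> gen (insert g X)" "x = a + b" for a b
  proof -
    obtain a' m where a: "a' \<in> gen X" "a = a' + m * g" using ab(1) by (auto simp: gen_insert)
    obtain b' n where b: "b' \<in> gen X" "b = b' + n * g" using ab(2) by (auto simp: gen_insert)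
    have xe: "x = (a' + b') + (m + n) * g" using a b ab(3) by (simp add: algebra_simps)
    have "Gcd X dvd a' + b'" using a b by (simp add: gen_Gcd_dvd)
    moreover have "Gcd X dvd x" using xS' by (simp add: gen_Gcd_dvd)
    ultimately have "Gcd X dvd (m + n) * g" using xe by (metis dvd_add_right_iff)
    then have "c dvd m + n" unfolding c_def using c_dvd[OF d] by blast
    then obtain q where q: "m + n = c * q" by blast
    show ?thesis
    proof (cases "q = 0")
      case True
      then have "m = 0" "n = 0" using q by auto
      then show ?thesis using xat[of a b] a b ab(3) by simp
    next
      case False
      then obtain q' where q': "q = Suc q'" by (cases q) auto
      have "x = c * g + ((a' + b') + q' * (c * g))" using xe q q' by (simp add: algebra_simps)
      moreover have "c * g \<in> gen X" using cg by (simp add: c_def)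
      moreover have "(a' + b') + q' * (c * g) \<in> gen X"
        using gen_add[OF gen_add[OF a(1) b(1)] gen_mult[OF \<open>c * g \<in> gen X\<close>, of q']] .
      moreover have "c * g \<noteq> 0" using c0 g by simp
      ultimately have "(a' + b') + q' * (c * g) = 0" using xat[of "c * g" "(a' + b') + q' * (c * g)"] by auto
      then have "x = c * g" using \<open>x = c * g + ((a' + b') + q' * (c * g))\<close> by simp
      then show ?thesis using xne by (simp add: c_def)
    qed
  qed
  then show ?thesis using xS xS' by (auto simp: atoms_def)
qed

lemma nonatom_cg:
  assumes "2 \<le> c" "0 < g"
  shows "c * g \<notin> atoms (gen (insert g X))"
proof -
  have "c * g = g + (c - 1) * g" using assms by (simp add: diff_mult_distrib)
  moreover have "g \<in> gen (insert g X)" "(c - 1) * g \<in> gen (insert g X)"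
    by (auto intro: gen_base gen_mult)
  moreover have "(c - 1) * g \<noteq> 0" using assms by simp
  ultimately show ?thesis unfolding atoms_def by auto
qed

lemma atoms_step:
  assumes d: "0 < Gcd X" and cg: "(Gcd X div gcd (Gcd X) g) * g \<in> gen X" and g: "0 < g"
    and c2: "2 \<le> Gcd X div gcd (Gcd X) g" and gn: "g \<notin> gen X"
  shows "atoms (gen (insert g X)) = insert g (atoms (gen X) - {(Gcd X div gcd (Gcd X) g) * g})"
proof
  have "gen (insert g (atoms (gen X))) = gen (insert g X)"
    by (rule gen_insert_cong) (rule gen_atoms)
  then have "atoms (gen (insert g X)) \<subseteq> insert g (atoms (gen X))"
    using atoms_subset[of "insert g (atoms (gen X))"] by simp
  then show "atoms (gen (insert g X)) \<subseteq> insert g (atoms (gen X) - {(Gcd X div gcd (Gcd X) g) * g})"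
    using nonatom_cg[OF c2 g, of X] by blast
  show "insert g (atoms (gen X) - {(Gcd X div gcd (Gcd X) g) * g}) \<subseteq> atoms (gen (insert g X))"
    using atom_new[OF gn g] atom_old[OF d cg g] by blast
qed




lemma Gcd_pos: "x \<in> Y \<Longrightarrow> 0 < (x::nat) \<Longrightarrow> 0 < Gcd Y"
  using Gcd_0_iff[of Y] by (metis empty_iff gr0I insert_iff subset_iff)

lemma replace_cnd:
  assumes dx: "distinct xs" and i: "i < length xs" and xi: "xs ! i = c * g" and d0: "0 < (d::nat)"
    and dall: "\<forall>y\<in>set xs. d dvd y" and da: "d dvd a" and c: "c = d div gcd d g"
    and cn: "cnd (set xs) a"
  shows "cnd (set (xs[i:=g])) a"
proof -
  define Z where "Z = set xs - {c * g}"
  define R where "R = Gcd Z"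
  have sx: "set xs = insert (c * g) Z" unfolding Z_def using i xi nth_mem[OF i] by auto
  have sn: "set (xs[i:=g]) = insert g Z" unfolding Z_def using set_update_distinct[OF dx i, of g] xi by simp
  have dR: "d dvd R" unfolding R_def Z_def using dall by (auto intro: Gcd_greatest)
  have c0: "0 < c" unfolding c using d0 by (rule c_pos)
  have D1: "Gcd (set xs) = c * gcd R g"
  proof -
    have "Gcd (set xs) = gcd (c * g) R" by (simp add: sx R_def)
    also have "\<dots> = gcd R (c * g)" by (rule gcd.commute)
    also have "\<dots> = c * gcd R g" unfolding c using key[OF d0 dR] .
    finally show ?thesis .
  qed
  have E1: "Gcd (set (xs[i:=g])) = gcd R g" by (simp add: sn R_def gcd.commute)
  have "gcd (Gcd (set xs)) a = gcd (gcd R (c * g)) a" using D1 key[OF d0 dR] c by simp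
  also have "\<dots> = gcd (gcd R a) (c * g)" by (simp add: ac_simps)
  also have "\<dots> = c * gcd (gcd R a) g" unfolding c using key[OF d0] dR da by simp
  also have "\<dots> = c * gcd (gcd R g) a" by (simp add: ac_simps)
  finally have G: "gcd (Gcd (set xs)) a = c * gcd (gcd R g) a" .
  have q: "Gcd (set xs) div gcd (Gcd (set xs)) a = gcd R g div gcd (gcd R g) a"
  proof -
    have "Gcd (set xs) div gcd (Gcd (set xs)) a = Gcd (set xs) div (c * gcd (gcd R g) a)" by (simp only: G)
    also have "\<dots> = (c * gcd R g) div (c * gcd (gcd R g) a)" by (simp only: D1)
    also have "\<dots> = gcd R g div gcd (gcd R g) a" using c0 by (simp add: div_mult_mult1)
    finally show ?thesis .
  qed
  have sub: "gen (set xs) \<subseteq> gen (insert g Z)"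
  proof (rule gen_sub_gen)
    have "c * g \<in> gen (insert g Z)" by (intro gen_mult gen_base) simp
    moreover have "Z \<subseteq> gen (insert g Z)" by (auto intro: gen_base)
    ultimately show "set xs \<subseteq> gen (insert g Z)" using sx by auto
  qed
  have "gcd R g div gcd (gcd R g) a * a \<in> gen (insert g Z)" using cn sub unfolding cnd_def q by auto
  then show ?thesis unfolding cnd_def E1 unfolding sn .
qed

lemma step:
  assumes T: "T A" and dA: "distinct A" and at: "atoms (gen (set A)) = set A" and g: "0 < g"
    and cn: "cnd (set A) g"
  shows "\<exists>B. T B \<and> distinct B \<and> set B = atoms (gen (insert g (set A)))"
proof -
  define d where "d = Gcd (set A)"
  have Ane: "A \<noteq> []" and Apos: "\<forall>x\<in>set A. 0 < x"
    and Acn: "\<And>j. 0 < j \<Longrightarrow> j < length A \<Longrightarrow> cnd (set (take j A)) (A!j)"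
    using T unfolding T_def by auto
  have d0: "0 < d" unfolding d_def using Ane Apos Gcd_pos[of "hd A" "set A"] by simp
  have dall: "\<forall>y\<in>set A. d dvd y" unfolding d_def by simp
  define c where "c = d div gcd d g"
  have c0: "0 < c" unfolding c_def using d0 by (rule c_pos)
  have cg: "c * g \<in> gen (set A)" using cn unfolding cnd_def c_def d_def .
  show ?thesis
  proof (cases "c = 1")
    case True
    then have "g \<in> gen (set A)" using cg by simp
    then have "gen (insert g (set A)) = gen (set A)"
      using gen_sub_gen[of "insert g (set A)" "set A"] gen_mono[of "set A" "insert g (set A)"]
      by (auto intro: gen_base)
    then show ?thesis using T dA at by auto
  next
    case False
    then have c2: "2 \<le> c" using c0 by linarith
    have gn: "g \<notin> gen (set A)"
    proof
      assume "g \<in> gen (set A)"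
      then have "d dvd g" unfolding d_def by (rule gen_Gcd_dvd)
      then have "c = 1" unfolding c_def using c_one[OF d0, of g] by blast
      then show False using False by simp
    qed
    have gA: "g \<notin> set A" using gn gen_base by blast
    have ats: "atoms (gen (insert g (set A))) = insert g (set A - {c * g})"
      using atoms_step[of "set A" g] d0 cg g c2 gn at unfolding c_def d_def by simp
    show ?thesis
    proof (cases "c * g \<in> set A")
      case False
      have "T (A @ [g])" using T_snoc[OF T g cn] .
      moreover have "distinct (A @ [g])" using dA gA by simp
      moreover have "set (A @ [g]) = atoms (gen (insert g (set A)))" using ats False by auto
      ultimately show ?thesis by blast
    next
      case True
      then obtain i where i: "i < length A" and Ai: "A ! i = c * g" by (auto simp: in_set_conv_nth)
      define B where "B = A[i := g]"
      have sB: "set B = insert g (set A - {c * g})" unfolding B_def using set_update_distinct[OF dA i, of g] Ai by simp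
      have dB: "distinct B" unfolding B_def using gA by (intro distinct_list_update[OF dA]) auto
      have lB: "length B = length A" by (simp add: B_def)
      have "cnd (set (take j B)) (B ! j)" if j: "0 < j" "j < length B" for j
      proof -
        consider "j < i" | "j = i" | "i < j" by linarith
        then show ?thesis
        proof cases
          case 1
          then show ?thesis using Acn[of j] j lB by (simp add: B_def)
        next
          case 2
          define Y where "Y = set (take i A)"
          define D where "D = Gcd Y"
          have tB: "take j B = take i A" "B ! j = g" using 2 i by (simp_all add: B_def)
          have dD: "d dvd D" unfolding D_def Y_def using dall by (auto intro: Gcd_greatest dest: in_set_takeD)
          have ccg: "cnd Y (c * g)" unfolding Y_def using Acn[of i] j 2 lB Ai by simp
          define k where "k = gcd D g"
          have k: "gcd D (c * g) = c * k" unfolding c_def k_def using key[OF d0 dD] .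
          have "gcd D (c * g) dvd D" by simp
          then obtain t where t: "D = c * k * t" using k by (metis dvdE)
          have k0: "0 < k" using g by (simp add: k_def)
          have e1: "D div gcd D (c * g) = t" unfolding k using t c0 k0 by simp
          have e2: "D div gcd D g = c * t" unfolding k_def[symmetric] using t c0 k0 by (simp add: ac_simps)
          have eq: "D div gcd D (c * g) * (c * g) = D div gcd D g * g" unfolding e1 e2 by (simp add: ac_simps)
          have m1: "D div gcd D (c * g) * (c * g) \<in> gen Y" using ccg unfolding cnd_def D_def .
          have m2: "D div gcd D g * g \<in> gen Y" using m1 unfolding eq .
          have "cnd Y g" unfolding cnd_def D_def[symmetric] using m2 .
          then show ?thesis using tB unfolding Y_def by simp
        next
          case 3
          have tB: "take j B = (take j A)[i := g]" "B ! j = A ! j"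
            using 3 by (simp_all add: B_def take_update_swap)
          have "cnd (set ((take j A)[i := g])) (A ! j)"
          proof (rule replace_cnd[OF _ _ _ d0 _ _ c_def])
            show "distinct (take j A)" using dA by simp
            show "i < length (take j A)" using 3 j lB by simp
            show "take j A ! i = c * g" using 3 Ai by simp
            show "\<forall>y\<in>set (take j A). d dvd y" using dall by (auto dest: in_set_takeD)
            show "d dvd A ! j" using dall j lB by simp
            show "cnd (set (take j A)) (A ! j)" using Acn[of j] j lB by simp
          qed
          then show ?thesis using tB by simp
        qed
      qed
      moreover have "B \<noteq> []" using Ane by (simp add: B_def)
      moreover have "\<forall>x\<in>set B. 0 < x" using sB Apos g by auto
      ultimately have "T B" unfolding T_def by blast
      then show ?thesis using dB sB ats by blast
    qed
  qed
qed



lemma gen_zero: "X \<subseteq> {0} \<Longrightarrow> gen X = {0}"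
proof -
  assume X: "X \<subseteq> {0}"
  have "Gcd X = 0" using X by simp
  have "x = 0" if "x \<in> gen X" for x using gen_Gcd_dvd[OF that] \<open>Gcd X = 0\<close> by simp
  then show ?thesis using gen0 by blast
qed

lemma atoms_single:
  assumes "X \<subseteq> {0}" "0 < g"
  shows "atoms (gen (insert g X)) = {g}"
proof -
  have "g \<notin> gen X" using gen_zero[OF assms(1)] assms(2) by simp
  then have "g \<in> atoms (gen (insert g X))" using atom_new assms(2) by blast
  moreover have "atoms (gen (insert g X)) \<subseteq> {g}"
    using atoms_subset[of "insert g X"] assms(1) by (auto simp: atoms_def)
  ultimately show ?thesis by blast
qed

lemma T_single: "0 < g \<Longrightarrow> T [g]"
  by (simp add: T_def)

lemma cnd_cong: "gen Y = gen Z \<Longrightarrow> cnd Y x = cnd Z x"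
  unfolding cnd_def using gen_eq_Gcd[of Y Z] by simp

lemma main_ind:
  assumes tel: "telescopic P"
  shows "1 \<le> k \<Longrightarrow> k \<le> length P \<Longrightarrow> (\<exists>x\<in>set (take k P). x \<noteq> 0) \<Longrightarrow>
     \<exists>A. T A \<and> distinct A \<and> set A = atoms (gen (set (take k P)))"
proof (induction k)
  case 0 then show ?case by simp
next
  case (Suc k)
  have Pne: "P \<noteq> []" and nd1: "length P = 1 \<longrightarrow> P!0 > 0" and nd2: "2 \<le> length P \<longrightarrow> 0 < P!0 + P!1"
    and Pcn: "\<And>j. 0 < j \<Longrightarrow> j < length P \<Longrightarrow> cnd (set (take j P)) (P!j)"
    using tel unfolding tele_alt by auto
  have kl: "k < length P" using Suc.prems by simp
  have tS: "set (take (Suc k) P) = insert (P ! k) (set (take k P))"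
    using kl by (simp add: take_Suc_conv_app_nth)
  show ?case
  proof (cases "\<exists>x\<in>set (take k P). x \<noteq> 0")
    case False
    then have X0: "set (take k P) \<subseteq> {0}" by auto
    have g0: "0 < P ! k" using False Suc.prems(3) tS by auto
    show ?thesis
      using T_single[OF g0] atoms_single[OF X0 g0] tS by (intro exI[of _ "[P!k]"]) simp
  next
    case True
    then have k1: "1 \<le> k" by (cases k) auto
    obtain A' where A': "T A'" "distinct A'" "set A' = atoms (gen (set (take k P)))"
      using Suc.IH[OF k1 _ True] kl by auto
    define X where "X = set (take k P)"
    have genA': "gen (set A') = gen X" using A'(3) gen_atoms unfolding X_def by simp
    have atA': "atoms (gen (set A')) = set A'" using A'(3) genA' unfolding X_def by simp
    show ?thesis
    proof (cases "P ! k = 0")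
      case True
      have "gen (insert 0 X) = gen X" by (auto simp: gen_insert)
      then show ?thesis using A' tS True unfolding X_def by auto
    next
      case False
      then have g: "0 < P ! k" by simp
      have "cnd X (P ! k)" using Pcn[of k] k1 kl unfolding X_def by simp
      then have "cnd (set A') (P ! k)" using cnd_cong[OF genA'] by simp
      from step[OF A'(1) A'(2) atA' g this] obtain B where
        B: "T B" "distinct B" "set B = atoms (gen (insert (P ! k) (set A')))" by blast
      have "gen (insert (P ! k) (set A')) = gen (insert (P ! k) X)" using gen_insert_cong[OF genA'] .
      then show ?thesis using B tS unfolding X_def by auto
    qed
  qed
qed

lemma distinct_mset_le: "distinct xs \<Longrightarrow> set xs \<subseteq> set ys \<Longrightarrow> mset xs \<subseteq># mset ys"
proof (rule mset_subset_eqI)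
  fix a assume "distinct xs" "set xs \<subseteq> set ys"
  then show "count (mset xs) a \<le> count (mset ys) a"
    by (cases "a \<in> set xs") (auto simp: distinct_count_atmost_1 count_mset_0_iff Suc_le_eq
        dest!: subsetD intro: count_greater_zero_iff[THEN iffD2])
qed

lemma one_dir:
  assumes eq: "lincomb_set G = lincomb_set H" and s: "\<sigma> permutes {..<length G}"
    and tel: "telescopic (permute_seq \<sigma> G)"
  shows "\<exists>\<tau>. \<tau> permutes {..<length H} \<and> telescopic (permute_seq \<tau> H)"
proof -
  define P where "P = permute_seq \<sigma> G"
  have PG: "mset P = mset G" unfolding P_def permute_seq_def using mset_permute_list[OF s]
    by (simp add: permute_list_def)
  then have sP: "set P = set G" by (metis set_mset_mset)
  have telP: "telescopic P" using tel P_def by simp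
  have Pne: "P \<noteq> []" and nd1: "length P = 1 \<longrightarrow> P!0 > 0" and nd2: "2 \<le> length P \<longrightarrow> 0 < P!0 + P!1"
    using telP unfolding tele_alt by auto
  have nz: "\<exists>x\<in>set (take (length P) P). x \<noteq> 0"
  proof -
    have "length P = 1 \<or> 2 \<le> length P" using Pne by (cases P) (auto simp: Suc_le_eq)
    then have "P ! 0 \<noteq> 0 \<or> (1 < length P \<and> P ! 1 \<noteq> 0)" using nd1 nd2 by auto
    then show ?thesis using Pne by (auto intro: nth_mem)
  qed
  obtain A where A: "T A" "distinct A" "set A = atoms (gen (set P))"
  proof -
    have "1 \<le> length P" using Pne by (cases P) auto
    then show ?thesis using main_ind[OF telP _ _ nz] that by auto
  qed
  have SH: "gen (set P) = gen (set H)" using eq sP by (simp add: lincomb_gen)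
  have Aat: "set A = atoms (gen (set H))" using A(3) SH by simp
  have AH: "set A \<subseteq> set H" using Aat atoms_subset by simp
  have genA: "gen (set A) = gen (set H)" using Aat gen_atoms by simp
  have Ane: "A \<noteq> []" and Apos: "\<forall>x\<in>set A. 0 < x"
    and Acn: "\<And>j. 0 < j \<Longrightarrow> j < length A \<Longrightarrow> cnd (set (take j A)) (A!j)"
    using A(1) unfolding T_def by auto
  have le: "mset A \<subseteq># mset H" using distinct_mset_le[OF A(2) AH] .
  obtain R where R: "mset R = mset H - mset A" using ex_mset by blast
  define H' where "H' = A @ R"
  have mH': "mset H' = mset H" unfolding H'_def using R le by (simp add: subset_mset.add_diff_inverse)
  then have sH': "set H' = set H" by (metis set_mset_mset)
  have telH': "telescopic H'"
    unfolding tele_alt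
  proof (intro conjI allI impI)
    show "H' \<noteq> []" using Ane by (simp add: H'_def)
    have "H' ! 0 = A ! 0" using Ane by (simp add: H'_def nth_append)
    moreover have "A ! 0 > 0" using Ane Apos by simp
    ultimately show "length H' = 1 \<Longrightarrow> 0 < H' ! 0" "2 \<le> length H' \<Longrightarrow> 0 < H' ! 0 + H' ! 1" by auto
    fix j assume j: "0 < j \<and> j < length H'"
    show "cnd (set (take j H')) (H' ! j)"
    proof (cases "j < length A")
      case True then show ?thesis using Acn[of j] j by (simp add: H'_def nth_append)
    next
      case False
      define Y where "Y = set (take j H')"
      have AY: "set A \<subseteq> Y" unfolding Y_def H'_def using False by auto
      have YH: "Y \<subseteq> gen (set A)" unfolding Y_def genA using sH'
        by (auto dest: in_set_takeD intro: gen_base)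
      have gY: "gen Y = gen (set A)" using gen_mono[OF AY] gen_sub_gen[OF YH] by blast
      have GY: "Gcd Y = Gcd (set A)" using gen_eq_Gcd[OF gY] .
      have d0: "0 < Gcd (set A)" using Ane Apos Gcd_pos[of "hd A" "set A"] by simp
      have xH: "H' ! j \<in> gen (set A)" using j sH' genA nth_mem[of j H'] by (auto intro: gen_base)
      then have "Gcd (set A) dvd H' ! j" by (rule gen_Gcd_dvd)
      then have "gcd (Gcd (set A)) (H' ! j) = Gcd (set A)" by (simp add: gcd_nat.absorb1)
      then have "Gcd Y div gcd (Gcd Y) (H' ! j) = Gcd (set A) div Gcd (set A)" using GY by simp
      also have "\<dots> = 1" by (rule div_self) (use d0 in linarith)
      finally have one: "Gcd Y div gcd (Gcd Y) (H' ! j) = 1" .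
      show ?thesis using xH gY unfolding cnd_def Y_def[symmetric] one by simp
    qed
  qed
  obtain \<tau> where "\<tau> permutes {..<length H}" "permute_list \<tau> H = H'"
    using mset_eq_permutation[OF mH'] .
  then show ?thesis using telH' by (auto simp: permute_seq_def permute_list_def)
qed

theorem mainTheorem3:
  fixes G H :: "nat list"
  assumes "\<exists>x\<in>set G. x \<noteq> 0"
    and "\<exists>x\<in>set H. x \<noteq> 0"
    and "lincomb_set G = lincomb_set H"
  shows "(\<exists>\<sigma>. \<sigma> permutes {..<length G} \<and> telescopic (permute_seq \<sigma> G)) \<longleftrightarrow>
         (\<exists>\<tau>. \<tau> permutes {..<length H} \<and> telescopic (permute_seq \<tau> H))"
  using one_dir[OF assms(3)] one_dir[OF assms(3)[symmetric]] by blast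


end
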